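(* The structure $\mathcal{X}_{\mathrm{PNA}}=(X,\sqsubseteq,\oplus,X)$ is a down-closed BI frame.
   Context: Fix a set $\mathrm{Var}$ of variables; values are real numbers. For finite $S\subseteq\mathrm{Var}$, $\mathrm{Mem}[S]$ is the set of maps $S\to\mathbb{R}$, ordered pointwise; $p_A(m)$ is restriction. $\mathcal{D}(Y)$ denotes countably supported probability distributions on $Y$; for $\mu\in\mathcal{D}(\mathrm{Mem}[S])$, $\mathrm{dom}(\mu)=S$ and $\pi_A\mu$ is the marginal on $A\subseteq S$. $X=\bigcup_{S\text{ finite}}\mathcal{D}(\mathrm{Mem}[S])$, and $\mu\sqsubseteq\mu'$ iff $\mathrm{dom}(\mu)\subseteq\mathrm{dom}(\mu')$ and $\pi_{\mathrm{dom}(\mu)}\mu'=\mu$. A partition is a set of pairwise disjoint nonempty sets; $\mathcal{T}$ coarsens $\mathcal{S}$ if $\bigcup\mathcal{T}=\bigcup\mathcal{S}$ and each element of $\mathcal{T}$ is a union of a subfamily of $\mathcal{S}$. For a partition $\mathcal{S}$ with $\bigcup\mathcal{S}\subseteq\mathrm{dom}(\mu)$, $\mu$ is $\mathcal{S}$-PNA if for every $\mathcal{T}$ coarsening $\mathcal{S}$ and every family $(f_A:\mathrm{Mem}[A]\to[0,\infty))_{A\in\mathcal{T}}$ all non-decreasing or all non-increasing, $\mathbb{E}_{m\sim\mu}[\prod_Af_A(p_Am)]\le\prod_A\mathbb{E}_{m\sim\mu}[f_A(p_Am)]$. For $\mu_1\in\mathcal{D}(\mathrm{Mem}[S])$, $\mu_2\in\mathcal{D}(\mathrm{Mem}[T])$,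 $\mu_1\oplus\mu_2$ is empty if $S\cap T\neq\emptyset$ and otherwise is the set of $\mu\in\mathcal{D}(\mathrm{Mem}[S\cup T])$ with $\pi_S\mu=\mu_1$, $\pi_T\mu=\mu_2$ such that $\mu$ is $(\mathcal{S}\cup\mathcal{T})$-PNA for all partitions $\mathcal{S}$ of a subset of $S$ and $\mathcal{T}$ of a subset of $T$ with $\mu_1$ $\mathcal{S}$-PNA and $\mu_2$ $\mathcal{T}$-PNA. A (down-closed) BI frame is a tuple $(X,\sqsubseteq,\oplus,E)$, $\sqsubseteq$ a preorder, $\oplus:X\times X\to\mathcal{P}(X)$, $E\subseteq X$, satisfying: (Down-Closed) $z\in x\oplus y$, $x'\sqsubseteq x$, $y'\sqsubseteq y$ imply some $z'\sqsubseteq z$ with $z'\in x'\oplus y'$; (Commutativity) $z\in x\oplus y\Rightarrow z\in y\oplus x$; (Associativity) $w\in t\oplus z$ and $t\in x\oplus y$ imply some $s\in y\oplus z$ with $w\in x\oplus s$; (Unit Existence) for each $x$ some $e\in E$ has $x\in e\oplus x$; (Unit Coherence) $e\in E$, $x\in y\oplus e\Rightarrow y\sqsubseteq x$; (Unit Closure) $e\in E$, $e\sqsubseteq e'\Rightarrow e'\in E$. *)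

theory Defs
  imports "HOL-Probability.Probability" "HOL-Library.FuncSet"
begin

text \<open>Memories over a finite set S of variables are represented as extensional
  functions (value undefined outside S).\<close>

definition Mem :: "'v set \<Rightarrow> ('v \<Rightarrow> real) set" where
  "Mem S = extensional S"

definition mem_le :: "'v set \<Rightarrow> ('v \<Rightarrow> real) \<Rightarrow> ('v \<Rightarrow> real) \<Rightarrow> bool" where
  "mem_le A m m' \<longleftrightarrow> (\<forall>x\<in>A. m x \<le> m' x)"

type_synonym 'v state = "'v set \<times> ('v \<Rightarrow> real) pmf"

definition XPNA :: "'v state set" where
  "XPNA = {(S, \<mu>). finite S \<and> set_pmf \<mu> \<subseteq> Mem S}"

definition marg :: "'v set \<Rightarrow> ('v \<Rightarrow> real) pmf \<Rightarrow> ('v \<Rightarrow> real) pmf" where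
  "marg A \<mu> = map_pmf (\<lambda>m. restrict m A) \<mu>"

definition le_PNA :: "'v state \<Rightarrow> 'v state \<Rightarrow> bool" where
  "le_PNA x y \<longleftrightarrow> fst x \<subseteq> fst y \<and> marg (fst x) (snd y) = snd x"

definition is_partition :: "'a set set \<Rightarrow> bool" where
  "is_partition P \<longleftrightarrow> (\<forall>A\<in>P. A \<noteq> {}) \<and> (\<forall>A\<in>P. \<forall>B\<in>P. A \<noteq> B \<longrightarrow> A \<inter> B = {})"

definition coarsens :: "'a set set \<Rightarrow> 'a set set \<Rightarrow> bool" where
  "coarsens T S \<longleftrightarrow> \<Union>T = \<Union>S \<and> (\<forall>A\<in>T. \<exists>U\<subseteq>S. A = \<Union>U)"

definition PNA :: "'v set \<Rightarrow> ('v \<Rightarrow> real) pmf \<Rightarrow> 'v set set \<Rightarrow> bool" where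
  "PNA D \<mu> \<S> \<longleftrightarrow> is_partition \<S> \<and> \<Union>\<S> \<subseteq> D \<and>
     (\<forall>\<T> F. is_partition \<T> \<and> coarsens \<T> \<S> \<and>
        (\<forall>A\<in>\<T>. \<forall>m\<in>Mem A. 0 \<le> F A m) \<and>
        ((\<forall>A\<in>\<T>. \<forall>m\<in>Mem A. \<forall>m'\<in>Mem A. mem_le A m m' \<longrightarrow> F A m \<le> F A m') \<or>
         (\<forall>A\<in>\<T>. \<forall>m\<in>Mem A. \<forall>m'\<in>Mem A. mem_le A m m' \<longrightarrow> F A m' \<le> F A m))
      \<longrightarrow> (\<integral>\<^sup>+ m. ennreal (\<Prod>A\<in>\<T>. F A (restrict m A)) \<partial>measure_pmf \<mu>)
          \<le> (\<Prod>A\<in>\<T>. \<integral>\<^sup>+ m. ennreal (F A (restrict m A)) \<partial>measure_pmf \<mu>))"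

definition oplus_PNA :: "'v state \<Rightarrow> 'v state \<Rightarrow> 'v state set" where
  "oplus_PNA x y =
    (if fst x \<inter> fst y \<noteq> {} then {}
     else {(fst x \<union> fst y, \<mu>) | \<mu>.
            set_pmf \<mu> \<subseteq> Mem (fst x \<union> fst y) \<and>
            marg (fst x) \<mu> = snd x \<and> marg (fst y) \<mu> = snd y \<and>
            (\<forall>\<S> \<T>. is_partition \<S> \<and> \<Union>\<S> \<subseteq> fst x \<and>
                    is_partition \<T> \<and> \<Union>\<T> \<subseteq> fst y \<and>
                    PNA (fst x) (snd x) \<S> \<and> PNA (fst y) (snd y) \<T>
                    \<longrightarrow> PNA (fst x \<union> fst y) \<mu> (\<S> \<union> \<T>))})"

definition BI_frame :: "'a set \<Rightarrow> ('a \<Rightarrow> 'a \<Rightarrow> bool) \<Rightarrow> ('a \<Rightarrow> 'a \<Rightarrow> 'a set) \<Rightarrow> 'a set \<Rightarrow> bool" where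
  "BI_frame Xc le op E \<longleftrightarrow>
     (\<forall>x\<in>Xc. le x x) \<and>
     (\<forall>x\<in>Xc. \<forall>y\<in>Xc. \<forall>z\<in>Xc. le x y \<longrightarrow> le y z \<longrightarrow> le x z) \<and>
     (\<forall>x\<in>Xc. \<forall>y\<in>Xc. op x y \<subseteq> Xc) \<and>
     E \<subseteq> Xc \<and>
     (\<forall>x\<in>Xc. \<forall>y\<in>Xc. \<forall>z\<in>Xc. \<forall>x'\<in>Xc. \<forall>y'\<in>Xc.
        z \<in> op x y \<longrightarrow> le x' x \<longrightarrow> le y' y \<longrightarrow> (\<exists>z'\<in>Xc. le z' z \<and> z' \<in> op x' y')) \<and>
     (\<forall>x\<in>Xc. \<forall>y\<in>Xc. \<forall>z\<in>Xc. z \<in> op x y \<longrightarrow> z \<in> op y x) \<and>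
     (\<forall>w\<in>Xc. \<forall>t\<in>Xc. \<forall>x\<in>Xc. \<forall>y\<in>Xc. \<forall>z\<in>Xc.
        w \<in> op t z \<longrightarrow> t \<in> op x y \<longrightarrow> (\<exists>s\<in>Xc. s \<in> op y z \<and> w \<in> op x s)) \<and>
     (\<forall>x\<in>Xc. \<exists>e\<in>E. x \<in> op e x) \<and>
     (\<forall>e\<in>E. \<forall>x\<in>Xc. \<forall>y\<in>Xc. x \<in> op y e \<longrightarrow> le y x) \<and>
     (\<forall>e\<in>E. \<forall>e'\<in>Xc. le e e' \<longrightarrow> e' \<in> E)"

end

theory Submission
  imports Defs
begin

lemma marg_id: "set_pmf \<mu> \<subseteq> Mem S \<Longrightarrow> marg S \<mu> = \<mu>"
  unfolding marg_def Mem_def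
  by (rule map_pmf_idI) (auto intro: extensional_restrict)

lemma marg_marg: "A \<subseteq> B \<Longrightarrow> marg A (marg B \<mu>) = marg A \<mu>"
  unfolding marg_def map_pmf_comp by (simp add: Int_absorb1)

lemma set_marg: "set_pmf (marg A \<mu>) \<subseteq> Mem A"
  unfolding marg_def Mem_def by auto

lemma oplus_mem: "z \<in> oplus_PNA x y \<longleftrightarrow> fst x \<inter> fst y = {} \<and> fst z = fst x \<union> fst y \<and>
   set_pmf (snd z) \<subseteq> Mem (fst x \<union> fst y) \<and> marg (fst x) (snd z) = snd x \<and> marg (fst y) (snd z) = snd y \<and>
   (\<forall>\<S> \<T>. is_partition \<S> \<and> \<Union>\<S> \<subseteq> fst x \<and> is_partition \<T> \<and> \<Union>\<T> \<subseteq> fst y \<and>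
       PNA (fst x) (snd x) \<S> \<and> PNA (fst y) (snd y) \<T> \<longrightarrow> PNA (fst x \<union> fst y) (snd z) (\<S> \<union> \<T>))"
  by (cases z) (auto simp: oplus_PNA_def)

lemma partition_empty: "is_partition {}" by (simp add: is_partition_def)

lemma partition_sub_empty: "is_partition P \<Longrightarrow> \<Union>P \<subseteq> {} \<Longrightarrow> P = {}"
  by (auto simp: is_partition_def)

lemma PNA_empty: "PNA D \<mu> {}"
proof -
  have "\<T> = {}" if "is_partition \<T>" "coarsens \<T> {}" for \<T> :: "'a set set"
    using that by (auto simp: is_partition_def coarsens_def)
  moreover have "(\<integral>\<^sup>+ m. ennreal 1 \<partial>measure_pmf \<mu>) = 1"
    by (simp add: measure_pmf.emeasure_space_1)
  ultimately show ?thesis unfolding PNA_def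
    apply (intro conjI partition_empty allI impI, simp)
    apply (elim conjE)
    subgoal premises p for T F
    proof -
      have "T = {}" using p(1)[OF p(3) p(4)] .
      then show ?thesis by (simp add: measure_pmf.emeasure_space_1)
    qed
    done
qed

lemma nn_marg: "(\<integral>\<^sup>+ m. f m \<partial>measure_pmf (marg D \<mu>)) = (\<integral>\<^sup>+ m. f (restrict m D) \<partial>measure_pmf \<mu>)"
  by (simp add: marg_def)

lemma PNA_marg:
  assumes "\<Union>P \<subseteq> D'" "D' \<subseteq> D"
  shows "PNA D' (marg D' \<mu>) P \<longleftrightarrow> PNA D \<mu> P"
proof -
  have e1: "(\<integral>\<^sup>+ m. ennreal (\<Prod>A\<in>\<T>. F A (restrict m A)) \<partial>measure_pmf (marg D' \<mu>))
      = (\<integral>\<^sup>+ m. ennreal (\<Prod>A\<in>\<T>. F A (restrict m A)) \<partial>measure_pmf \<mu>)"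
    and e2: "(\<Prod>A\<in>\<T>. \<integral>\<^sup>+ m. ennreal (F A (restrict m A)) \<partial>measure_pmf (marg D' \<mu>))
      = (\<Prod>A\<in>\<T>. \<integral>\<^sup>+ m. ennreal (F A (restrict m A)) \<partial>measure_pmf \<mu>)"
    if "coarsens \<T> P" for \<T> and F :: "'a set \<Rightarrow> ('a \<Rightarrow> real) \<Rightarrow> real"
  proof -
    have sub: "A \<subseteq> D'" if "A \<in> \<T>" for A
    proof -
      have "A \<subseteq> \<Union>\<T>" using that by blast
      also have "\<dots> = \<Union>P" using \<open>coarsens \<T> P\<close> by (simp add: coarsens_def)
      finally show ?thesis using assms by blast
    qed
    then have r: "D' \<inter> A = A" if "A \<in> \<T>" for A
      using that by blast
    show "(\<integral>\<^sup>+ m. ennreal (\<Prod>A\<in>\<T>. F A (restrict m A)) \<partial>measure_pmf (marg D' \<mu>))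
      = (\<integral>\<^sup>+ m. ennreal (\<Prod>A\<in>\<T>. F A (restrict m A)) \<partial>measure_pmf \<mu>)"
      unfolding nn_marg by (simp add: r cong: prod.cong)
    show "(\<Prod>A\<in>\<T>. \<integral>\<^sup>+ m. ennreal (F A (restrict m A)) \<partial>measure_pmf (marg D' \<mu>))
      = (\<Prod>A\<in>\<T>. \<integral>\<^sup>+ m. ennreal (F A (restrict m A)) \<partial>measure_pmf \<mu>)"
      unfolding nn_marg by (rule prod.cong) (simp_all add: r)
  qed
  show ?thesis using assms unfolding PNA_def
    by (auto simp: e1 e2)
qed

lemma prod_transfer:
  assumes "finite T'" "h ` T \<subseteq> T'" "inj_on h T" "\<And>C. C \<in> T' - h ` T \<Longrightarrow> \<phi> C = 1"
  shows "prod \<phi> T' = prod (\<lambda>A. \<phi> (h A)) T"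
proof -
  have "prod \<phi> T' = prod \<phi> (h ` T)"
    using assms by (intro prod.mono_neutral_right) auto
  also have "\<dots> = prod (\<lambda>A. \<phi> (h A)) T"
    using assms(3) by (simp add: prod.reindex)
  finally show ?thesis .
qed

lemma partition_finite: "finite D \<Longrightarrow> \<Union>T \<subseteq> D \<Longrightarrow> finite T"
  by (meson finite_UnionD finite_subset)

lemma PNA_transfer:
  assumes fin: "finite D" and P: "PNA D \<mu> P" and Qp: "is_partition Q" and QD: "\<Union>Q \<subseteq> D"
  and H: "\<And>T. is_partition T \<Longrightarrow> coarsens T Q \<Longrightarrow>
     \<exists>T' h. is_partition T' \<and> coarsens T' P \<and> inj_on h T \<and> h ` T \<subseteq> T' \<and> (\<forall>A\<in>T. A \<subseteq> h A)"
  shows "PNA D \<mu> Q"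
  unfolding PNA_def
proof (intro conjI Qp QD allI impI)
  fix T and F :: "'a set \<Rightarrow> ('a \<Rightarrow> real) \<Rightarrow> real"
  assume a: "is_partition T \<and> coarsens T Q \<and> (\<forall>A\<in>T. \<forall>m\<in>Mem A. 0 \<le> F A m) \<and>
        ((\<forall>A\<in>T. \<forall>m\<in>Mem A. \<forall>m'\<in>Mem A. mem_le A m m' \<longrightarrow> F A m \<le> F A m') \<or>
         (\<forall>A\<in>T. \<forall>m\<in>Mem A. \<forall>m'\<in>Mem A. mem_le A m m' \<longrightarrow> F A m' \<le> F A m))"
  note aT = conjunct1[OF a] and aC = conjunct1[OF conjunct2[OF a]]
    and a0 = conjunct1[OF conjunct2[OF conjunct2[OF a]]] and a1 = conjunct2[OF conjunct2[OF conjunct2[OF a]]]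
  from H[OF aT aC] obtain T' h where T': "is_partition T'" "coarsens T' P" "inj_on h T" "h ` T \<subseteq> T'" "\<forall>A\<in>T. A \<subseteq> h A"
    by blast
  define g where "g = the_inv_into T h"
  have gh: "g (h A) = A" if "A \<in> T" for A
    unfolding g_def using T'(3) that by (rule the_inv_into_f_f)
  define G where "G C m = (if C \<in> h ` T then F (g C) (restrict m (g C)) else 1)" for C m
  have PD: "\<Union>P \<subseteq> D" using P by (simp add: PNA_def)
  have finT': "finite T'"
    using T'(2) PD fin by (intro partition_finite[of D]) (auto simp: coarsens_def)
  have mle: "mem_le A (restrict m A) (restrict m' A)" if "mem_le C m m'" "A \<subseteq> C" for A C m m'
    using that by (auto simp: mem_le_def)
  have nonneg: "\<forall>C\<in>T'. \<forall>m\<in>Mem C. 0 \<le> G C m"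
  proof (intro ballI)
    fix C m assume "C \<in> T'" "m \<in> Mem C"
    show "0 \<le> G C m"
    proof (cases "C \<in> h ` T")
      case True
      then obtain A where A: "A \<in> T" "C = h A" by blast
      then show ?thesis using a0 by (simp add: G_def gh Mem_def)
    qed (simp add: G_def)
  qed
  have mono: "(\<forall>C\<in>T'. \<forall>m\<in>Mem C. \<forall>m'\<in>Mem C. mem_le C m m' \<longrightarrow> G C m \<le> G C m') \<or>
         (\<forall>C\<in>T'. \<forall>m\<in>Mem C. \<forall>m'\<in>Mem C. mem_le C m m' \<longrightarrow> G C m' \<le> G C m)"
  proof (rule disjE[OF a1])
  assume i: "\<forall>A\<in>T. \<forall>m\<in>Mem A. \<forall>m'\<in>Mem A. mem_le A m m' \<longrightarrow> F A m \<le> F A m'"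
  show ?thesis
  proof (rule disjI1, intro ballI impI)
    fix C m m' assume "C \<in> T'" "m \<in> Mem C" "m' \<in> Mem C" "mem_le C m m'"
    show "G C m \<le> G C m'"
    proof (cases "C \<in> h ` T")
      case True
      then obtain A where A: "A \<in> T" "C = h A" by blast
      have "mem_le A (restrict m A) (restrict m' A)"
        using mle[OF \<open>mem_le C m m'\<close>] T'(5) A by auto
      then show ?thesis using i A by (simp add: G_def gh Mem_def)
    qed (simp add: G_def)
  qed
next
  assume i: "\<forall>A\<in>T. \<forall>m\<in>Mem A. \<forall>m'\<in>Mem A. mem_le A m m' \<longrightarrow> F A m' \<le> F A m"
  show ?thesis
  proof (rule disjI2, intro ballI impI)
    fix C m m' assume "C \<in> T'" "m \<in> Mem C" "m' \<in> Mem C" "mem_le C m m'"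
    show "G C m' \<le> G C m"
    proof (cases "C \<in> h ` T")
      case True
      then obtain A where A: "A \<in> T" "C = h A" by blast
      have "mem_le A (restrict m A) (restrict m' A)"
        using mle[OF \<open>mem_le C m m'\<close>] T'(5) A by auto
      then show ?thesis using i A by (simp add: G_def gh Mem_def)
    qed (simp add: G_def)
  qed
  qed
  have ineq: "(\<integral>\<^sup>+ m. ennreal (\<Prod>C\<in>T'. G C (restrict m C)) \<partial>measure_pmf \<mu>)
          \<le> (\<Prod>C\<in>T'. \<integral>\<^sup>+ m. ennreal (G C (restrict m C)) \<partial>measure_pmf \<mu>)"
  proof -
    have "\<forall>\<T> F. is_partition \<T> \<and> coarsens \<T> P \<and>
        (\<forall>A\<in>\<T>. \<forall>m\<in>Mem A. 0 \<le> F A m) \<and>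
        ((\<forall>A\<in>\<T>. \<forall>m\<in>Mem A. \<forall>m'\<in>Mem A. mem_le A m m' \<longrightarrow> F A m \<le> F A m') \<or>
         (\<forall>A\<in>\<T>. \<forall>m\<in>Mem A. \<forall>m'\<in>Mem A. mem_le A m m' \<longrightarrow> F A m' \<le> F A m))
      \<longrightarrow> (\<integral>\<^sup>+ m. ennreal (\<Prod>A\<in>\<T>. F A (restrict m A)) \<partial>measure_pmf \<mu>)
          \<le> (\<Prod>A\<in>\<T>. \<integral>\<^sup>+ m. ennreal (F A (restrict m A)) \<partial>measure_pmf \<mu>)"
      using P unfolding PNA_def by (elim conjE)
    from spec[OF spec[OF this, of T'], of G] T'(1,2) nonneg mono show ?thesis by blast
  qed
  have r: "h A \<inter> A = A" if "A \<in> T" for A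
    using T'(5) that by blast
  have e1: "(\<Prod>C\<in>T'. G C (restrict m C)) = (\<Prod>A\<in>T. F A (restrict m A))" for m
  proof -
    have "(\<Prod>C\<in>T'. G C (restrict m C)) = (\<Prod>A\<in>T. G (h A) (restrict m (h A)))"
      using finT' T'(3,4) by (intro prod_transfer) (auto simp: G_def)
    also have "\<dots> = (\<Prod>A\<in>T. F A (restrict m A))"
      by (rule prod.cong) (auto simp: G_def gh r)
    finally show ?thesis .
  qed
  have e2: "(\<Prod>C\<in>T'. \<integral>\<^sup>+ m. ennreal (G C (restrict m C)) \<partial>measure_pmf \<mu>)
     = (\<Prod>A\<in>T. \<integral>\<^sup>+ m. ennreal (F A (restrict m A)) \<partial>measure_pmf \<mu>)"
  proof -
    have "(\<Prod>C\<in>T'. \<integral>\<^sup>+ m. ennreal (G C (restrict m C)) \<partial>measure_pmf \<mu>)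
       = (\<Prod>A\<in>T. \<integral>\<^sup>+ m. ennreal (G (h A) (restrict m (h A))) \<partial>measure_pmf \<mu>)"
      using finT' T'(3,4) by (intro prod_transfer) (auto simp: G_def measure_pmf.emeasure_space_1)
    also have "\<dots> = (\<Prod>A\<in>T. \<integral>\<^sup>+ m. ennreal (F A (restrict m A)) \<partial>measure_pmf \<mu>)"
      by (rule prod.cong) (auto simp: G_def gh r)
    finally show ?thesis .
  qed
  show "(\<integral>\<^sup>+ m. ennreal (\<Prod>A\<in>T. F A (restrict m A)) \<partial>measure_pmf \<mu>)
          \<le> (\<Prod>A\<in>T. \<integral>\<^sup>+ m. ennreal (F A (restrict m A)) \<partial>measure_pmf \<mu>)"
    using ineq unfolding e1 e2 .
qed

lemma coarsensD: "coarsens T Q \<Longrightarrow> A \<in> T \<Longrightarrow> \<exists>U\<subseteq>Q. A = \<Union>U"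
  unfolding coarsens_def by (elim conjE) (rule bspec)

lemma coarsens_trans:
  assumes "coarsens T Q" "coarsens Q P" shows "coarsens T P"
proof -
  have u: "\<Union>T = \<Union>P" using assms unfolding coarsens_def by simp
  have ex: "\<exists>U\<subseteq>P. A = \<Union>U" if AT: "A \<in> T" for A
  proof (intro exI conjI)
    show "{p\<in>P. p \<subseteq> A} \<subseteq> P" by blast
    show "A = \<Union>{p\<in>P. p \<subseteq> A}"
    proof
      show "\<Union>{p\<in>P. p \<subseteq> A} \<subseteq> A" by blast
      show "A \<subseteq> \<Union>{p\<in>P. p \<subseteq> A}"
      proof
        fix x assume "x \<in> A"
        obtain U where U: "U \<subseteq> Q" "A = \<Union>U" using coarsensD[OF assms(1) AT] by blast
        then obtain q where q: "q \<in> U" "x \<in> q" using \<open>x \<in> A\<close> by blast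
        have "q \<in> Q" using q(1) U(1) by blast
        then obtain V where V: "V \<subseteq> P" "q = \<Union>V" using coarsensD[OF assms(2)] by blast
        then obtain p where "p \<in> V" "x \<in> p" using q(2) by blast
        moreover have "q \<subseteq> A" using U q(1) by blast
        ultimately show "x \<in> \<Union>{p\<in>P. p \<subseteq> A}" using V by blast
      qed
    qed
  qed
  show ?thesis unfolding coarsens_def
    by (rule conjI[OF u ballI]) (rule ex)
qed

lemma PNA_coarsen:
  assumes "finite D" "PNA D \<mu> P" "is_partition Q" "coarsens Q P"
  shows "PNA D \<mu> Q"
proof (rule PNA_transfer[OF assms(1,2,3)])
  have "\<Union>P \<subseteq> D" using assms(2) unfolding PNA_def by blast
  moreover have "\<Union>Q = \<Union>P" using assms(4) unfolding coarsens_def by blast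
  ultimately show "\<Union>Q \<subseteq> D" by simp
  fix T assume T: "is_partition T" "coarsens T Q"
  have "coarsens T P" using coarsens_trans[OF T(2) assms(4)] .
  moreover have "inj_on id T" by simp
  ultimately show "\<exists>T' h. is_partition T' \<and> coarsens T' P \<and> inj_on h T \<and> h ` T \<subseteq> T' \<and> (\<forall>A\<in>T. A \<subseteq> h A)"
    using T(1) by (intro exI[of _ T] exI[of _ id]) simp
qed

lemma PNA_proj:
  assumes fin: "finite D" and P: "PNA D \<mu> P"
  shows "PNA D \<mu> {B \<inter> Y | B. B \<in> P \<and> B \<inter> Y \<noteq> {}}" (is "PNA D \<mu> ?Q")
proof -
  have Pp: "is_partition P" and PD: "\<Union>P \<subseteq> D" using P by (auto simp: PNA_def)
  have Pd: "B = B'" if "B \<in> P" "B' \<in> P" "x \<in> B" "x \<in> B'" for B B' x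
    using Pp that by (auto simp: is_partition_def)
  have Qp: "is_partition ?Q"
    unfolding is_partition_def using Pd by blast
  show ?thesis
  proof (rule PNA_transfer[OF fin P Qp])
    show "\<Union>?Q \<subseteq> D" using PD by blast
    fix T assume Tp: "is_partition T" and TQ: "coarsens T ?Q"
    have TU: "\<Union>T = \<Union>?Q" using TQ unfolding coarsens_def by (rule conjunct1)
    have TY: "A \<subseteq> Y" if "A \<in> T" for A using that TU by blast
    have key: "B \<inter> Y \<subseteq> A" if kB: "B \<in> P" and kA: "A \<in> T" and kx: "x \<in> B \<inter> Y" and kxA: "x \<in> A" for B A x
    proof -
      obtain U where U: "U \<subseteq> ?Q" "A = \<Union>U" using TQ \<open>A \<in> T\<close> by (auto simp: coarsens_def)
      then obtain q where q: "q \<in> U" "x \<in> q" using kxA by blast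
      then obtain B' where B': "B' \<in> P" "q = B' \<inter> Y" using U by blast
      then have "B = B'" using Pd[OF kB B'(1)] kx q by blast
      then show ?thesis using B' q U by blast
    qed
    define h where "h A = \<Union>{B\<in>P. B \<inter> Y \<noteq> {} \<and> B \<inter> Y \<subseteq> A}" for A
    define T' where "T' = h ` T \<union> {B\<in>P. B \<inter> Y = {}}"
    have sub: "A \<subseteq> h A" if "A \<in> T" for A
    proof
      fix x assume "x \<in> A"
      then have "x \<in> \<Union>T" using that by blast
      then have "x \<in> \<Union>?Q" unfolding TU .
      then obtain B where B: "B \<in> P" "x \<in> B \<inter> Y" by blast
      then have "B \<inter> Y \<subseteq> A" using key[OF B(1) that B(2) \<open>x \<in> A\<close>] by blast
      then show "x \<in> h A" using B unfolding h_def by blast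
    qed
    have hY: "h A \<inter> Y = A" if "A \<in> T" for A
      using sub[OF that] TY[OF that] unfolding h_def by blast
    have inj: "inj_on h T"
      by (rule inj_on_inverseI[of _ "\<lambda>C. C \<inter> Y"]) (simp add: hY)
    have Tne: "A \<noteq> {}" if "A \<in> T" for A using Tp that unfolding is_partition_def by blast
    have Td: "A \<inter> A' = {}" if "A \<in> T" "A' \<in> T" "A \<noteq> A'" for A A'
      using Tp that unfolding is_partition_def by blast
    have Pne: "B \<noteq> {}" if "B \<in> P" for B using Pp that unfolding is_partition_def by blast
    have memT': "\<exists>B\<in>P. x \<in> B \<and> B \<subseteq> C \<and> (B \<inter> Y = {} \<longrightarrow> C = B) \<and>
        (B \<inter> Y \<noteq> {} \<longrightarrow> (\<exists>A\<in>T. C = h A \<and> B \<inter> Y \<subseteq> A))" if "C \<in> T'" "x \<in> C" for C x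
    proof -
      consider (a) A where "A \<in> T" "C = h A" | (b) "C \<in> P" "C \<inter> Y = {}"
        using \<open>C \<in> T'\<close> unfolding T'_def by blast
      then show ?thesis
      proof cases
        case a
        then have "x \<in> \<Union>{B\<in>P. B \<inter> Y \<noteq> {} \<and> B \<inter> Y \<subseteq> A}" using \<open>x \<in> C\<close> h_def by simp
        then obtain B where "B \<in> P" "B \<inter> Y \<noteq> {}" "B \<inter> Y \<subseteq> A" "x \<in> B" by blast
        moreover have "B \<subseteq> C" using calculation a unfolding h_def by blast
        ultimately show ?thesis using a by blast
      next
        case b then show ?thesis using \<open>x \<in> C\<close> by blast
      qed
    qed
    have T'p: "is_partition T'"
      unfolding is_partition_def
    proof (intro conjI ballI impI)
      fix C assume "C \<in> T'"
      show "C \<noteq> {}"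
      proof
      assume "C = {}"
      then have "{} \<in> T'" using \<open>C \<in> T'\<close> by simp
      then show False unfolding T'_def
      proof (elim UnE imageE CollectE conjE)
        fix A assume "{} = h A" "A \<in> T"
        then show False using Tne sub by blast
      next
        assume "{} \<in> P" then show False using Pne by blast
      qed
      qed
    next
      fix C C' assume C0: "C \<in> T'" "C' \<in> T'" "C \<noteq> C'"
      show "C \<inter> C' = {}"
      proof (rule ccontr)
        assume "C \<inter> C' \<noteq> {}"
        then obtain x where "x \<in> C" "x \<in> C'" by blast
        note C = C0 this
        obtain B where B: "B \<in> P" "x \<in> B" "B \<subseteq> C" "B \<inter> Y = {} \<longrightarrow> C = B"
          "B \<inter> Y \<noteq> {} \<longrightarrow> (\<exists>A\<in>T. C = h A \<and> B \<inter> Y \<subseteq> A)"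
          using memT'[OF C(1,4)] by blast
        obtain B' where B': "B' \<in> P" "x \<in> B'" "B' \<subseteq> C'" "B' \<inter> Y = {} \<longrightarrow> C' = B'"
          "B' \<inter> Y \<noteq> {} \<longrightarrow> (\<exists>A\<in>T. C' = h A \<and> B' \<inter> Y \<subseteq> A)"
          using memT'[OF C(2,5)] by blast
        have "B = B'" using Pd B(1,2) B'(1,2) by blast
        show False
        proof (cases "B \<inter> Y = {}")
          case True
          then have "C = B" "C' = B" using B(4) B'(4) \<open>B = B'\<close> by simp_all
          then show False using C(3) by simp
        next
          case False
          then obtain A where A: "A \<in> T" "C = h A" "B \<inter> Y \<subseteq> A" using B(5) by blast
          obtain A' where A': "A' \<in> T" "C' = h A'" "B \<inter> Y \<subseteq> A'" using B'(5) False \<open>B = B'\<close> by blast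
          have "A \<noteq> A'" using A(2) A'(2) C(3) by blast
          then have "A \<inter> A' = {}" using Td A(1) A'(1) by blast
          then show False using A(3) A'(3) False by blast
        qed
      qed
    qed
    have T'P: "coarsens T' P"
      unfolding coarsens_def
    proof (intro conjI equalityI subsetI ballI)
      fix x assume "x \<in> \<Union>T'"
      then obtain C where "x \<in> C" "C \<in> T'" by blast
      then show "x \<in> \<Union>P" using memT' by blast
    next
      fix x assume "x \<in> \<Union>P"
      then obtain B where xB: "x \<in> B" "B \<in> P" by blast
      show "x \<in> \<Union>T'"
      proof (cases "B \<inter> Y = {}")
        case True then show ?thesis using xB unfolding T'_def by blast
      next
        case False
        then obtain y where y: "y \<in> B \<inter> Y" by blast
        then have "y \<in> \<Union>?Q" using xB by blast
        then have "y \<in> \<Union>T" unfolding TU .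
        then obtain A where A: "A \<in> T" "y \<in> A" by blast
        then have "B \<inter> Y \<subseteq> A" using key[OF xB(2) A(1) y] by blast
        then have "B \<subseteq> h A" using False xB unfolding h_def by blast
        then show ?thesis using A xB unfolding T'_def by blast
      qed
    next
      fix C assume "C \<in> T'"
      then consider (a) A where "A \<in> T" "C = h A" | (b) "C \<in> P" "C \<inter> Y = {}"
        unfolding T'_def by blast
      then show "\<exists>U\<subseteq>P. C = \<Union>U"
      proof cases
        case a then show ?thesis unfolding h_def
          by (intro exI[of _ "{B\<in>P. B \<inter> Y \<noteq> {} \<and> B \<inter> Y \<subseteq> A}"]) blast
      next
        case b then show ?thesis by (intro exI[of _ "{C}"]) blast
      qed
    qed
    show "\<exists>T' h. is_partition T' \<and> coarsens T' P \<and> inj_on h T \<and> h ` T \<subseteq> T' \<and> (\<forall>A\<in>T. A \<subseteq> h A)"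
      using T'p T'P inj sub unfolding T'_def by blast
  qed
qed


lemma XPNA_iff: "x \<in> XPNA \<longleftrightarrow> finite (fst x) \<and> set_pmf (snd x) \<subseteq> Mem (fst x)"
  by (cases x) (simp add: XPNA_def)

lemma PNA_part: "PNA D \<mu> P \<Longrightarrow> is_partition P \<and> \<Union>P \<subseteq> D"
  unfolding PNA_def by (elim conjE) simp

lemma partition_ne: "is_partition P \<Longrightarrow> X \<in> P \<Longrightarrow> X \<noteq> {}"
  unfolding is_partition_def by (elim conjE) (rule bspec)
lemma partition_disj: "is_partition P \<Longrightarrow> X \<in> P \<Longrightarrow> Y \<in> P \<Longrightarrow> X \<noteq> Y \<Longrightarrow> X \<inter> Y = {}"
  unfolding is_partition_def by (elim conjE) blast
lemma partition_Un:
  assumes a: "is_partition A" and b: "is_partition B" and d: "\<Union>A \<inter> \<Union>B = {}"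
  shows "is_partition (A \<union> B)"
  unfolding is_partition_def
proof (intro conjI ballI impI)
  fix X assume "X \<in> A \<union> B"
  then show "X \<noteq> {}" using partition_ne[OF a] partition_ne[OF b] by blast
next
  fix X Y assume XY: "X \<in> A \<union> B" "Y \<in> A \<union> B" "X \<noteq> Y"
  have da: "X \<inter> Y = {}" if "X \<in> A" "Y \<in> A" using partition_disj[OF a that XY(3)] .
  have db: "X \<inter> Y = {}" if "X \<in> B" "Y \<in> B" using partition_disj[OF b that XY(3)] .
  have dc: "X \<inter> Y = {}" if "X \<in> A" "Y \<in> B" using d that by blast
  have dd: "X \<inter> Y = {}" if "X \<in> B" "Y \<in> A" using d that by blast
  show "X \<inter> Y = {}" using XY(1,2) da db dc dd by blast
qed

lemma coarsens_split:
  assumes "\<Union>U \<subseteq> Y \<union> Z"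
  shows "coarsens (S \<union> U) (S \<union> {B \<inter> Y | B. B \<in> U \<and> B \<inter> Y \<noteq> {}} \<union> {B \<inter> Z | B. B \<in> U \<and> B \<inter> Z \<noteq> {}})"
    (is "coarsens _ ?P")
  unfolding coarsens_def
proof (intro conjI ballI)
  show "\<Union>(S \<union> U) = \<Union>?P"
  proof
    show "\<Union>(S \<union> U) \<subseteq> \<Union>?P"
    proof
      fix x assume "x \<in> \<Union>(S \<union> U)"
      then obtain B where B: "B \<in> S \<union> U" "x \<in> B" by blast
      show "x \<in> \<Union>?P"
      proof (cases "B \<in> S")
        case True then show ?thesis using B by blast
      next
        case False
        then have "B \<in> U" using B by blast
        then have "x \<in> Y \<or> x \<in> Z" using assms B by blast
        then show ?thesis using B \<open>B \<in> U\<close> by blast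
      qed
    qed
    show "\<Union>?P \<subseteq> \<Union>(S \<union> U)" by blast
  qed
  fix A assume "A \<in> S \<union> U"
  then consider "A \<in> S" | "A \<in> U" by blast
  then show "\<exists>V\<subseteq>?P. A = \<Union>V"
  proof cases
    case 1 then show ?thesis by (intro exI[of _ "{A}"]) blast
  next
    case 2
    have AYZ: "A \<subseteq> Y \<union> Z" using assms 2 by blast
    show ?thesis
    proof (intro exI[of _ "{A \<inter> Y, A \<inter> Z} - {{}}"] conjI)
      show "{A \<inter> Y, A \<inter> Z} - {{}} \<subseteq> ?P" using 2 by blast
      show "A = \<Union>({A \<inter> Y, A \<inter> Z} - {{}})" using AYZ by blast
    qed
  qed
qed

lemma oplusD:
  assumes "z \<in> oplus_PNA x y"
  shows "fst x \<inter> fst y = {}" "fst z = fst x \<union> fst y" "set_pmf (snd z) \<subseteq> Mem (fst x \<union> fst y)"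
    "marg (fst x) (snd z) = snd x" "marg (fst y) (snd z) = snd y"
    and "\<And>S T. is_partition S \<Longrightarrow> \<Union>S \<subseteq> fst x \<Longrightarrow> is_partition T \<Longrightarrow> \<Union>T \<subseteq> fst y \<Longrightarrow>
       PNA (fst x) (snd x) S \<Longrightarrow> PNA (fst y) (snd y) T \<Longrightarrow> PNA (fst x \<union> fst y) (snd z) (S \<union> T)"
  using assms unfolding oplus_mem by simp_all

lemma oplusI:
  assumes "fst x \<inter> fst y = {}" "fst z = fst x \<union> fst y" "set_pmf (snd z) \<subseteq> Mem (fst x \<union> fst y)"
    "marg (fst x) (snd z) = snd x" "marg (fst y) (snd z) = snd y"
    and "\<And>S T. is_partition S \<Longrightarrow> \<Union>S \<subseteq> fst x \<Longrightarrow> is_partition T \<Longrightarrow> \<Union>T \<subseteq> fst y \<Longrightarrow>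
       PNA (fst x) (snd x) S \<Longrightarrow> PNA (fst y) (snd y) T \<Longrightarrow> PNA (fst x \<union> fst y) (snd z) (S \<union> T)"
  shows "z \<in> oplus_PNA x y"
  unfolding oplus_mem
proof (intro conjI allI impI)
  fix S T assume a: "is_partition S \<and> \<Union>S \<subseteq> fst x \<and> is_partition T \<and> \<Union>T \<subseteq> fst y \<and>
       PNA (fst x) (snd x) S \<and> PNA (fst y) (snd y) T"
  show "PNA (fst x \<union> fst y) (snd z) (S \<union> T)"
    using a by (elim conjE) (rule assms(6))
qed (fact assms)+

lemma L_refl: "x \<in> XPNA \<Longrightarrow> le_PNA x x"
  by (simp add: le_PNA_def XPNA_iff marg_id)

lemma L_trans: "le_PNA x y \<Longrightarrow> le_PNA y z \<Longrightarrow> le_PNA x z"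
proof -
  assume a: "le_PNA x y" "le_PNA y z"
  have 1: "fst x \<subseteq> fst y" "marg (fst x) (snd y) = snd x" using a(1) unfolding le_PNA_def by auto
  have 2: "fst y \<subseteq> fst z" "marg (fst y) (snd z) = snd y" using a(2) unfolding le_PNA_def by auto
  have "marg (fst x) (snd z) = marg (fst x) (marg (fst y) (snd z))"
    using 1(1) by (rule marg_marg[symmetric])
  also have "\<dots> = snd x" using 1 2 by simp
  finally show ?thesis using 1 2 unfolding le_PNA_def by auto
qed

lemma L_closed: "z \<in> oplus_PNA x y \<Longrightarrow> x \<in> XPNA \<Longrightarrow> y \<in> XPNA \<Longrightarrow> z \<in> XPNA"
  using oplusD(2,3)[of z x y] unfolding XPNA_iff by auto

lemma L_comm: "z \<in> oplus_PNA x y \<Longrightarrow> z \<in> oplus_PNA y x"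
proof -
  assume h: "z \<in> oplus_PNA x y"
  show ?thesis
  proof (rule oplusI)
    show "fst y \<inter> fst x = {}" using oplusD(1)[OF h] by blast
    show "fst z = fst y \<union> fst x" using oplusD(2)[OF h] by blast
    show "set_pmf (snd z) \<subseteq> Mem (fst y \<union> fst x)" using oplusD(3)[OF h] by (simp add: Un_commute)
    show "marg (fst y) (snd z) = snd y" by (rule oplusD(5)[OF h])
    show "marg (fst x) (snd z) = snd x" by (rule oplusD(4)[OF h])
    fix S T assume "is_partition S" "\<Union>S \<subseteq> fst y" "is_partition T" "\<Union>T \<subseteq> fst x"
       "PNA (fst y) (snd y) S" "PNA (fst x) (snd x) T"
    then have "PNA (fst x \<union> fst y) (snd z) (T \<union> S)" by (intro oplusD(6)[OF h])
    then show "PNA (fst y \<union> fst x) (snd z) (S \<union> T)" by (simp add: Un_commute)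
  qed
qed

lemma L_coh: "x \<in> oplus_PNA y e \<Longrightarrow> le_PNA y x"
  using oplusD(2,4)[of x y e] unfolding le_PNA_def by auto

lemma L_unit:
  assumes "x \<in> XPNA"
  shows "({}, return_pmf (\<lambda>_. undefined)) \<in> XPNA \<and> x \<in> oplus_PNA ({}, return_pmf (\<lambda>_. undefined)) x"
proof
  show "({}, return_pmf (\<lambda>_. undefined)) \<in> XPNA"
    by (simp add: XPNA_def Mem_def extensional_def)
  have r: "restrict m {} = (\<lambda>_. undefined)" for m :: "'a \<Rightarrow> real" by (simp add: restrict_def)
  have fx: "finite (fst x)" and sx: "set_pmf (snd x) \<subseteq> Mem (fst x)" using assms by (auto simp: XPNA_iff)
  show "x \<in> oplus_PNA ({}, return_pmf (\<lambda>_. undefined)) x"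
  proof (rule oplusI)
    show "marg (fst ({}::'a set, return_pmf (\<lambda>_. undefined))) (snd x) = snd ({}::'a set, return_pmf (\<lambda>_. undefined))"
      by (simp add: marg_def r)
    show "marg (fst x) (snd x) = snd x" using sx by (rule marg_id)
    show "fst ({}::'a set, return_pmf (\<lambda>_. undefined)) \<inter> fst x = {}" by simp
    show "fst x = fst ({}::'a set, return_pmf (\<lambda>_. undefined)) \<union> fst x" by simp
    show "set_pmf (snd x) \<subseteq> Mem (fst ({}::'a set, return_pmf (\<lambda>_. undefined)) \<union> fst x)" using sx by simp
    fix S T assume a: "is_partition S" "\<Union>S \<subseteq> fst ({}::'a set, return_pmf (\<lambda>_. undefined))" "is_partition T" "\<Union>T \<subseteq> fst x"
      "PNA (fst ({}::'a set, return_pmf (\<lambda>_. undefined))) (snd ({}::'a set, return_pmf (\<lambda>_. undefined))) S" "PNA (fst x) (snd x) T"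
    have "S = {}" using partition_sub_empty[OF a(1)] a(2) by simp
    then show "PNA (fst ({}::'a set, return_pmf (\<lambda>_. undefined)) \<union> fst x) (snd x) (S \<union> T)" using a(6) by simp
  qed
qed

lemma L_down:
  assumes z: "z \<in> oplus_PNA x y" and xx: "x' \<in> XPNA" and yy: "y' \<in> XPNA"
    and lx: "le_PNA x' x" and ly: "le_PNA y' y"
  shows "\<exists>z'\<in>XPNA. le_PNA z' z \<and> z' \<in> oplus_PNA x' y'"
proof -
  note h = oplusD[OF z]
  have Dx: "fst x' \<subseteq> fst x" and mx: "marg (fst x') (snd x) = snd x'" using lx by (auto simp: le_PNA_def)
  have Dy: "fst y' \<subseteq> fst y" and my: "marg (fst y') (snd y) = snd y'" using ly by (auto simp: le_PNA_def)
  define z' where "z' = (fst x' \<union> fst y', marg (fst x' \<union> fst y') (snd z))"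
  have "z' \<in> XPNA" using xx yy by (auto simp: XPNA_iff z'_def set_marg)
  moreover have "le_PNA z' z" using h(2) Dx Dy by (auto simp: le_PNA_def z'_def)
  moreover have "z' \<in> oplus_PNA x' y'"
  proof (rule oplusI)
    show "fst x' \<inter> fst y' = {}" using h(1) Dx Dy by blast
    show "fst z' = fst x' \<union> fst y'" by (simp add: z'_def)
    show "set_pmf (snd z') \<subseteq> Mem (fst x' \<union> fst y')" by (simp add: z'_def set_marg)
    have "marg (fst x') (snd z') = marg (fst x') (marg (fst x) (snd z))"
      unfolding z'_def using Dx by (simp add: marg_marg)
    then show "marg (fst x') (snd z') = snd x'" using h(4) mx by simp
    have "marg (fst y') (snd z') = marg (fst y') (marg (fst y) (snd z))"
      unfolding z'_def using Dy by (simp add: marg_marg)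
    then show "marg (fst y') (snd z') = snd y'" using h(5) my by simp
    fix S T assume a: "is_partition S" "\<Union>S \<subseteq> fst x'" "is_partition T" "\<Union>T \<subseteq> fst y'"
      "PNA (fst x') (snd x') S" "PNA (fst y') (snd y') T"
    have "PNA (fst x) (snd x) S"
      using PNA_marg[of S "fst x'" "fst x" "snd x"] a(2,5) Dx mx by simp
    moreover have "PNA (fst y) (snd y) T"
      using PNA_marg[of T "fst y'" "fst y" "snd y"] a(4,6) Dy my by simp
    moreover have "\<Union>S \<subseteq> fst x" "\<Union>T \<subseteq> fst y" using a(2,4) Dx Dy by auto
    ultimately have "PNA (fst x \<union> fst y) (snd z) (S \<union> T)" using h(6) a(1,3) by blast
    moreover have "\<Union>(S \<union> T) \<subseteq> fst x' \<union> fst y'" "fst x' \<union> fst y' \<subseteq> fst x \<union> fst y"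
      using a(2,4) Dx Dy by auto
    ultimately show "PNA (fst x' \<union> fst y') (snd z') (S \<union> T)"
      using PNA_marg[of "S \<union> T" "fst x' \<union> fst y'" "fst x \<union> fst y" "snd z"]
      by (simp add: z'_def)
  qed
  ultimately show ?thesis by blast
qed

lemma L_assoc:
  assumes w: "w \<in> oplus_PNA t z" and t: "t \<in> oplus_PNA x y" and wX: "w \<in> XPNA"
  shows "\<exists>s\<in>XPNA. s \<in> oplus_PNA y z \<and> w \<in> oplus_PNA x s"
proof -
  note hw = oplusD[OF w] and ht = oplusD[OF t]
  define s where "s = (fst y \<union> fst z, marg (fst y \<union> fst z) (snd w))"
  have finw: "finite (fst w)" using wX by (simp add: XPNA_iff)
  have fw: "fst w = fst t \<union> fst z" by (rule hw(2))
  have ft: "fst t = fst x \<union> fst y" by (rule ht(2))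
  have "fst y \<union> fst z \<subseteq> fst w" using fw ft by blast
  then have fins: "finite (fst y \<union> fst z)" using finw by (rule finite_subset)
  have fint: "finite (fst t \<union> fst z)" using finw fw by simp
  have sX: "s \<in> XPNA" unfolding XPNA_iff s_def using fins set_marg by simp
  have dxy: "fst x \<inter> fst y = {}" by (rule ht(1))
  have dtz: "fst t \<inter> fst z = {}" by (rule hw(1))
  have mx: "marg (fst x) (snd w) = snd x"
  proof -
    have "marg (fst x) (snd w) = marg (fst x) (marg (fst t) (snd w))"
      using ft by (simp add: marg_marg)
    also have "\<dots> = snd x" using hw(4) ht(4) by simp
    finally show ?thesis .
  qed
  have my: "marg (fst y) (snd w) = snd y"
  proof -
    have "marg (fst y) (snd w) = marg (fst y) (marg (fst t) (snd w))"
      using ft by (simp add: marg_marg)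
    also have "\<dots> = snd y" using hw(4) ht(5) by simp
    finally show ?thesis .
  qed
  have mz: "marg (fst z) (snd w) = snd z" by (rule hw(5))
  have sy: "s \<in> oplus_PNA y z"
  proof (rule oplusI)
    show "fst y \<inter> fst z = {}" using dtz ft by blast
    show "fst s = fst y \<union> fst z" by (simp add: s_def)
    show "set_pmf (snd s) \<subseteq> Mem (fst y \<union> fst z)" by (simp add: s_def set_marg)
    show "marg (fst y) (snd s) = snd y" using my by (simp add: s_def marg_marg)
    show "marg (fst z) (snd s) = snd z" using mz by (simp add: s_def marg_marg)
    fix S T assume a: "is_partition S" "\<Union>S \<subseteq> fst y" "is_partition T" "\<Union>T \<subseteq> fst z"
      "PNA (fst y) (snd y) S" "PNA (fst z) (snd z) T"
    note pT = a(6)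
    have "PNA (fst x \<union> fst y) (snd t) ({} \<union> S)"
      by (rule ht(6)[OF partition_empty _ a(1) a(2) PNA_empty a(5)]) simp
    then have pS: "PNA (fst t) (snd t) S" using ft by simp
    have "\<Union>S \<subseteq> fst t" using a(2) ft by blast
    have "PNA (fst t \<union> fst z) (snd w) (S \<union> T)"
      by (rule hw(6)[OF a(1) \<open>\<Union>S \<subseteq> fst t\<close> a(3) a(4) pS pT])
    moreover have "\<Union>(S \<union> T) \<subseteq> fst y \<union> fst z" "fst y \<union> fst z \<subseteq> fst t \<union> fst z"
      using a(2,4) ft by auto
    ultimately show "PNA (fst y \<union> fst z) (snd s) (S \<union> T)"
      using PNA_marg[of "S \<union> T" "fst y \<union> fst z" "fst t \<union> fst z" "snd w"] by (simp add: s_def)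
  qed
  note hs = oplusD[OF sy]
  have ws: "w \<in> oplus_PNA x s"
  proof (rule oplusI)
    have fe: "fst x \<union> fst s = fst t \<union> fst z" using ft by (simp add: s_def Un_assoc)
    show "fst x \<inter> fst s = {}" using dxy dtz ft by (auto simp: s_def)
    show "fst w = fst x \<union> fst s" using fw fe by simp
    show "set_pmf (snd w) \<subseteq> Mem (fst x \<union> fst s)" using hw(3) fe by simp
    show "marg (fst x) (snd w) = snd x" by (rule mx)
    show "marg (fst s) (snd w) = snd s" by (simp add: s_def)
    fix S U assume a: "is_partition S" "\<Union>S \<subseteq> fst x" "is_partition U" "\<Union>U \<subseteq> fst s"
      "PNA (fst x) (snd x) S" "PNA (fst s) (snd s) U"
    define R where "R = {B \<inter> fst y | B. B \<in> U \<and> B \<inter> fst y \<noteq> {}}"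
    define Q where "Q = {B \<inter> fst z | B. B \<in> U \<and> B \<inter> fst z \<noteq> {}}"
    have fins': "finite (fst s)" using fins by (simp add: s_def)
    have U_sub: "\<Union>U \<subseteq> fst y \<union> fst z" using a(4) by (simp add: s_def)
    have "PNA (fst s) (snd s) R" unfolding R_def by (rule PNA_proj[OF fins' a(6)])
    moreover have "\<Union>R \<subseteq> fst y" "fst y \<subseteq> fst s" unfolding R_def by (auto simp: s_def)
    ultimately have pR: "PNA (fst y) (snd y) R"
      using PNA_marg[of R "fst y" "fst s" "snd s"] hs(4) by simp
    have "PNA (fst s) (snd s) Q" unfolding Q_def by (rule PNA_proj[OF fins' a(6)])
    moreover have "\<Union>Q \<subseteq> fst z" "fst z \<subseteq> fst s" unfolding Q_def by (auto simp: s_def)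
    ultimately have pQ: "PNA (fst z) (snd z) Q"
      using PNA_marg[of Q "fst z" "fst s" "snd s"] hs(5) by simp
    have Rp: "is_partition R" "\<Union>R \<subseteq> fst y" using PNA_part[OF pR] by auto
    have Qp: "is_partition Q" "\<Union>Q \<subseteq> fst z" using PNA_part[OF pQ] by auto
    have "PNA (fst x \<union> fst y) (snd t) (S \<union> R)"
      by (rule ht(6)[OF a(1) a(2) Rp(1) Rp(2) a(5) pR])
    then have pSR: "PNA (fst t) (snd t) (S \<union> R)" using ft by simp
    have SRp: "is_partition (S \<union> R)"
      by (rule partition_Un[OF a(1) Rp(1)]) (use a(2) Rp(2) dxy in blast)
    have SRt: "\<Union>(S \<union> R) \<subseteq> fst t" using a(2) Rp(2) ft by blast
    have pSRQ: "PNA (fst t \<union> fst z) (snd w) (S \<union> R \<union> Q)"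
      by (rule hw(6)[OF SRp SRt Qp(1) Qp(2) pSR pQ])
    have SUp: "is_partition (S \<union> U)"
      by (rule partition_Un[OF a(1) a(3)]) (use a(2) U_sub dxy dtz ft in blast)
    have co: "coarsens (S \<union> U) (S \<union> R \<union> Q)"
      unfolding R_def Q_def by (rule coarsens_split[OF U_sub])
    have "PNA (fst t \<union> fst z) (snd w) (S \<union> U)"
      by (rule PNA_coarsen[OF fint pSRQ SUp co])
    moreover have "fst x \<union> fst s = fst t \<union> fst z" using ft by (simp add: s_def Un_assoc)
    ultimately show "PNA (fst x \<union> fst s) (snd w) (S \<union> U)" by simp
  qed
  show ?thesis using sX sy ws by blast
qed

theorem mainTheorem7:
  shows "BI_frame (XPNA :: 'v state set) le_PNA oplus_PNA XPNA"
  unfolding BI_frame_def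
proof (intro conjI)
  show "\<forall>x\<in>(XPNA :: 'v state set). le_PNA x x" using L_refl by blast
  show "\<forall>x\<in>(XPNA :: 'v state set). \<forall>y\<in>XPNA. \<forall>z\<in>XPNA. le_PNA x y \<longrightarrow> le_PNA y z \<longrightarrow> le_PNA x z"
    using L_trans by blast
  show "\<forall>x\<in>(XPNA :: 'v state set). \<forall>y\<in>XPNA. oplus_PNA x y \<subseteq> XPNA" using L_closed by blast
  show "(XPNA :: 'v state set) \<subseteq> XPNA" by simp
  show "\<forall>x\<in>(XPNA :: 'v state set). \<forall>y\<in>XPNA. \<forall>z\<in>XPNA. \<forall>x'\<in>XPNA. \<forall>y'\<in>XPNA.
        z \<in> oplus_PNA x y \<longrightarrow> le_PNA x' x \<longrightarrow> le_PNA y' y \<longrightarrow> (\<exists>z'\<in>XPNA. le_PNA z' z \<and> z' \<in> oplus_PNA x' y')"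
    using L_down by blast
  show "\<forall>x\<in>(XPNA :: 'v state set). \<forall>y\<in>XPNA. \<forall>z\<in>XPNA. z \<in> oplus_PNA x y \<longrightarrow> z \<in> oplus_PNA y x"
    using L_comm by blast
  show "\<forall>w\<in>(XPNA :: 'v state set). \<forall>t\<in>XPNA. \<forall>x\<in>XPNA. \<forall>y\<in>XPNA. \<forall>z\<in>XPNA.
        w \<in> oplus_PNA t z \<longrightarrow> t \<in> oplus_PNA x y \<longrightarrow> (\<exists>s\<in>XPNA. s \<in> oplus_PNA y z \<and> w \<in> oplus_PNA x s)"
    using L_assoc by blast
  show "\<forall>x\<in>(XPNA :: 'v state set). \<exists>e\<in>XPNA. x \<in> oplus_PNA e x" using L_unit by blast
  show "\<forall>e\<in>(XPNA :: 'v state set). \<forall>x\<in>XPNA. \<forall>y\<in>XPNA. x \<in> oplus_PNA y e \<longrightarrow> le_PNA y x"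
    using L_coh by blast
  show "\<forall>e\<in>(XPNA :: 'v state set). \<forall>e'\<in>XPNA. le_PNA e e' \<longrightarrow> e' \<in> XPNA" by blast
qed

end
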